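(* Let $\tau_i$ be an HC task that switches to HC mode at time $t_i\le t$, and suppose $D_i-D_i^L\le t-t_i<D_i$. Then $\tau_i$ generates maximal demand during $[0,t)$ with a release sequence in which successive jobs are released as soon as possible (every $T_i$ time units) and the first job is released either at time $0$ or at time $t-D_i-\lfloor (t-D_i)/T_i\rfloor\cdot T_i$.
   Context: A mixed-criticality sporadic task is $\tau_i=(T_i,L_i,\{C_i^L,C_i^H\},D_i)$: jobs are released with minimum separation $T_i$, $L_i\in\{LC,HC\}$, $D_i\le T_i$ is the relative deadline, and $C_i^L<C_i^H$ for HC tasks. Each task has a tightened deadline $D_i^L\le D_i$. An HC task is in LC mode until the instant $t_i$ at which some job requests to execute for more than $C_i^L$; from then on it is in HC mode. While in LC mode, a job released at $r$ must receive $C_i^L$ time units by $r+D_i^L$; once the task is in HC mode, a job may require up to $C_i^H$ units in total, to be received by its actual deadline $r+D_i$. The demand of a task during $[0,t)$ is the amount of execution that must be completed within $[0,t)$ in order to meet all of its deadlines that fall in $[0,t)$; execution with deadline after $t$ contributes no demand. "Maximal demand" is over all legal release sequences (minimum separation $T_i$) and all legal execution behaviours. *)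

theory Defs
  imports Complex_Main
begin

definition legal_release :: "real \<Rightarrow> real set \<Rightarrow> bool" where
  "legal_release T R \<longleftrightarrow>
     (\<forall>r\<in>R. 0 \<le> r) \<and> (\<forall>r\<in>R. \<forall>r'\<in>R. r \<noteq> r' \<longrightarrow> T \<le> \<bar>r - r'\<bar>)"

(* A job released at r is served in LC mode (tightened deadline r + DL,
   budget CL) iff its tightened deadline is not after the switch instant ti;
   otherwise the task is in HC mode during the job's lifetime (deadline r + D,
   budget CH). *)
definition lc_job :: "real \<Rightarrow> real \<Rightarrow> real \<Rightarrow> bool" where
  "lc_job DL ti r \<longleftrightarrow> r + DL \<le> ti"

definition job_deadline :: "real \<Rightarrow> real \<Rightarrow> real \<Rightarrow> real \<Rightarrow> real" where
  "job_deadline D DL ti r = (if lc_job DL ti r then r + DL else r + D)"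

(* Execution behaviour: c r is the total execution requested by the job
   released at r. *)
definition legal_behaviour ::
  "real \<Rightarrow> real \<Rightarrow> real \<Rightarrow> real \<Rightarrow> real set \<Rightarrow> (real \<Rightarrow> real) \<Rightarrow> bool" where
  "legal_behaviour CL CH DL ti R c \<longleftrightarrow>
     (\<forall>r\<in>R. 0 \<le> c r \<and> c r \<le> CH \<and> (lc_job DL ti r \<longrightarrow> c r \<le> CL))"

definition demand ::
  "real \<Rightarrow> real \<Rightarrow> real \<Rightarrow> real \<Rightarrow> real set \<Rightarrow> (real \<Rightarrow> real) \<Rightarrow> real" where
  "demand D DL ti t R c = (\<Sum>r\<in>{r\<in>R. job_deadline D DL ti r \<le> t}. c r)"

definition periodic_from :: "real \<Rightarrow> real \<Rightarrow> real set" where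
  "periodic_from T s = {s + real k * T | k. True}"

end

theory Submission
  imports Defs
begin

lemma count_le:
  assumes T: "0 < T" and L: "legal_release T R"
  shows "finite {r\<in>R. r \<le> x} \<and> card {r\<in>R. r \<le> x} \<le> nat (\<lfloor>x / T\<rfloor> + 1)"
proof -
  let ?A = "{r\<in>R. r \<le> x}"
  let ?f = "\<lambda>r. \<lfloor>r / T\<rfloor>"
  have inj: "inj_on ?f ?A"
  proof (rule inj_onI)
    fix r r' assume r: "r \<in> ?A" and r': "r' \<in> ?A" and eq: "?f r = ?f r'"
    have "\<bar>r / T - r' / T\<bar> < 1"
      using eq by linarith
    hence "\<bar>r - r'\<bar> < T" using T by (simp add: diff_divide_distrib[symmetric] abs_divide divide_less_eq)
    thus "r = r'" using L r r' unfolding legal_release_def by force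
  qed
  have sub: "?f ` ?A \<subseteq> {0..\<lfloor>x / T\<rfloor>}"
  proof
    fix y assume "y \<in> ?f ` ?A"
    then obtain r where r: "r \<in> R" "r \<le> x" and y: "y = ?f r" by auto
    have "0 \<le> r" using L r unfolding legal_release_def by auto
    hence "0 \<le> ?f r" using T by simp
    moreover have "?f r \<le> \<lfloor>x / T\<rfloor>" using r T by (intro floor_mono divide_right_mono) auto
    ultimately show "y \<in> {0..\<lfloor>x / T\<rfloor>}" using y by auto
  qed
  have fin: "finite ?A"
    using finite_imageD[OF finite_subset[OF sub] inj] by simp
  have "card ?A = card (?f ` ?A)" using card_image[OF inj] by simp
  also have "\<dots> \<le> card {0..\<lfloor>x / T\<rfloor>}" by (rule card_mono[OF _ sub]) simp
  also have "\<dots> = nat (\<lfloor>x / T\<rfloor> + 1)" by simp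
  finally show ?thesis using fin by simp
qed

lemma periodic_legal:
  assumes "0 < T" "0 \<le> s"
  shows "legal_release T (periodic_from T s)"
  unfolding legal_release_def periodic_from_def
proof safe
  fix k :: nat show "0 \<le> s + real k * T" using assms by simp
next
  fix k k' :: nat assume "s + real k * T \<noteq> s + real k' * T"
  hence "k \<noteq> k'" by auto
  hence "1 \<le> \<bar>real k - real k'\<bar>" by linarith
  hence "1 * T \<le> \<bar>real k - real k'\<bar> * T" using assms by (intro mult_right_mono) auto
  thus "T \<le> \<bar>s + real k * T - (s + real k' * T)\<bar>"
    using assms by (simp add: left_diff_distrib[symmetric] abs_mult)
qed

theorem lemma4:
  fixes T CL CH D DL ti t :: real
  assumes "0 < T" and "0 < DL" and "DL \<le> D" and "D \<le> T"
    and "0 \<le> CL" and "CL < CH"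
    and "0 \<le> ti" and "ti \<le> t"
    and "D - DL \<le> t - ti" and "t - ti < D"
  shows "\<exists>s \<in> {0, t - D - real_of_int \<lfloor>(t - D) / T\<rfloor> * T}.
           \<exists>c. legal_release T (periodic_from T s) \<and>
               legal_behaviour CL CH DL ti (periodic_from T s) c \<and>
               (\<forall>R c'. legal_release T R \<longrightarrow> legal_behaviour CL CH DL ti R c' \<longrightarrow>
                  demand D DL ti t R c' \<le> demand D DL ti t (periodic_from T s) c)"
proof -
  define a where "a = ti - DL"
  define b where "b = t - D"
  define m where "m = \<lfloor>b / T\<rfloor>"
  define N0 where "N0 = nat (\<lfloor>a / T\<rfloor> + 1)"
  define c0 where "c0 = (\<lambda>r. if lc_job DL ti r then CL else CH)"
  have ab: "a \<le> b" "b < a + T" using assms unfolding a_def b_def by auto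
  have CH0: "0 \<le> CH" using assms by simp
  have lc_iff: "\<And>r. lc_job DL ti r \<longleftrightarrow> r \<le> a" unfolding lc_job_def a_def by auto
  have beh: "\<And>R. legal_behaviour CL CH DL ti R c0"
    unfolding legal_behaviour_def c0_def using assms by auto
  define V where "V = (if a < b \<and> 0 \<le> b then max (CL * real N0) (CH + CL * real_of_int m) else CL * real N0)"
  have upper: "demand D DL ti t R c' \<le> V" if LR: "legal_release T R" and LB: "legal_behaviour CL CH DL ti R c'" for R c'
  proof -
    let ?S = "{r\<in>R. job_deadline D DL ti r \<le> t}"
    let ?L = "{r\<in>R. r \<le> a}"
    let ?H = "{r\<in>R. a < r \<and> r \<le> b}"
    have Seq: "?S = ?L \<union> ?H"
      unfolding job_deadline_def using lc_iff assms unfolding a_def b_def by (auto simp: lc_job_def)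
    have cL: "finite ?L" and cardL: "card ?L \<le> N0" using count_le[OF assms(1) LR, of a] unfolding N0_def by auto
    have finB: "finite {r\<in>R. r \<le> b}" using count_le[OF assms(1) LR, of b] by auto
    have finH: "finite ?H" by (rule finite_subset[OF _ finB]) auto
    have disj: "?L \<inter> ?H = {}" by auto
    have "demand D DL ti t R c' = sum c' ?L + sum c' ?H"
      unfolding demand_def Seq by (rule sum.union_disjoint[OF cL finH disj])
    also have "sum c' ?L \<le> sum (\<lambda>_. CL) ?L"
      using LB lc_iff unfolding legal_behaviour_def by (intro sum_mono) auto
    also have "sum (\<lambda>_. CL) ?L = CL * real (card ?L)" by simp
    also have "sum c' ?H \<le> sum (\<lambda>_. CH) ?H"
      using LB unfolding legal_behaviour_def by (intro sum_mono) auto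
    also have "sum (\<lambda>_. CH) ?H = CH * real (card ?H)" by simp
    finally have d: "demand D DL ti t R c' \<le> CL * real (card ?L) + CH * real (card ?H)" by simp
    show ?thesis
    proof (cases "?H = {}")
      case True
      have "CL * real (card ?L) \<le> CL * real N0" using cardL assms by (intro mult_left_mono) auto
      thus ?thesis using d True unfolding V_def by auto
    next
      case False
      then obtain r where r: "r \<in> R" "a < r" "r \<le> b" by auto
      have Hr: "?H = {r}"
      proof safe
        fix r' assume r': "r' \<in> R" "a < r'" "r' \<le> b"
        show "r' = r"
        proof (rule ccontr)
          assume "r' \<noteq> r"
          hence "T \<le> \<bar>r' - r\<bar>" using LR r r' unfolding legal_release_def by auto
          thus False using r r' ab by linarith
        qed
      qed (use r in auto)
      have r0: "0 \<le> r" using LR r unfolding legal_release_def by auto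
      have "?L \<subseteq> {r'\<in>R. r' \<le> b - T}"
      proof safe
        fix r' assume r': "r' \<in> R" "r' \<le> a"
        have ne: "r' \<noteq> r" using r r' by auto
        have "T \<le> \<bar>r' - r\<bar>" using LR r(1) r'(1) ne unfolding legal_release_def by blast
        thus "r' \<le> b - T" using r r' by linarith
      qed
      hence "card ?L \<le> card {r'\<in>R. r' \<le> b - T}"
        using count_le[OF assms(1) LR, of "b - T"] by (intro card_mono) auto
      also have "\<dots> \<le> nat (\<lfloor>(b - T) / T\<rfloor> + 1)" using count_le[OF assms(1) LR, of "b - T"] by auto
      also have "(b - T) / T = b / T - 1" using assms(1) by (simp add: diff_divide_distrib)
      also have "nat (\<lfloor>b / T - 1\<rfloor> + 1) = nat m" unfolding m_def by simp
      finally have cl: "card ?L \<le> nat m" .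
      have m0: "0 \<le> m" unfolding m_def using r r0 assms(1) by simp
      have "CL * real (card ?L) \<le> CL * real (nat m)" using cl assms by (intro mult_left_mono) auto
      also have "real (nat m) = real_of_int m" using m0 by simp
      finally have "demand D DL ti t R c' \<le> CH + CL * real_of_int m" using d Hr by simp
      moreover have "a < b" "0 \<le> b" using r r0 by auto
      ultimately show ?thesis unfolding V_def by auto
    qed
  qed
  have finS: "finite {r\<in>periodic_from T s. job_deadline D DL ti r \<le> t}" if "0 \<le> s" for s
  proof -
    have "{r\<in>periodic_from T s. job_deadline D DL ti r \<le> t} \<subseteq> {r\<in>periodic_from T s. r \<le> t}"
      unfolding job_deadline_def using assms by auto
    thus ?thesis using count_le[OF assms(1) periodic_legal[OF assms(1) that], of t]
      using finite_subset by blast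
  qed
  have c0nn: "\<And>r. 0 \<le> c0 r" unfolding c0_def using assms by auto
  have low0: "CL * real N0 \<le> demand D DL ti t (periodic_from T 0) c0"
  proof -
    let ?P = "(\<lambda>k. real k * T) ` {..<N0}"
    have sub: "?P \<subseteq> {r\<in>periodic_from T 0. job_deadline D DL ti r \<le> t}"
    proof (rule image_subsetI, rule CollectI, rule conjI)
      fix k assume k: "k \<in> {..<N0}"
      show "real k * T \<in> periodic_from T 0" unfolding periodic_from_def by auto
      have "int k < \<lfloor>a / T\<rfloor> + 1" using k unfolding N0_def by auto
      hence "real k \<le> a / T" by linarith
      hence ka: "real k * T \<le> a" using assms(1) by (simp add: pos_le_divide_eq)
      thus "job_deadline D DL ti (real k * T) \<le> t"
        unfolding job_deadline_def using lc_iff assms unfolding a_def by auto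
    qed
    have inj: "inj_on (\<lambda>k. real k * T) {..<N0}" using assms(1) by (auto simp: inj_on_def)
    have "sum c0 ?P = sum (\<lambda>k. c0 (real k * T)) {..<N0}" using sum.reindex[OF inj] by simp
    also have "\<dots> = sum (\<lambda>k. CL) {..<N0}"
    proof (rule sum.cong)
      fix k assume k: "k \<in> {..<N0}"
      have "int k < \<lfloor>a / T\<rfloor> + 1" using k unfolding N0_def by auto
      hence "real k \<le> a / T" by linarith
      hence "real k * T \<le> a" using assms(1) by (simp add: pos_le_divide_eq)
      thus "c0 (real k * T) = CL" unfolding c0_def using lc_iff by auto
    qed simp
    also have "\<dots> = CL * real N0" by simp
    finally have "CL * real N0 = sum c0 ?P" by simp
    also have "\<dots> \<le> demand D DL ti t (periodic_from T 0) c0"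
      unfolding demand_def by (rule sum_mono2[OF finS sub]) (auto simp: c0nn)
    finally show ?thesis .
  qed
  define s1 where "s1 = b - real_of_int m * T"
  have low1: "CH + CL * real_of_int m \<le> demand D DL ti t (periodic_from T s1) c0"
    and s10: "0 \<le> s1" if h: "a < b" "0 \<le> b"
  proof -
    have m0: "0 \<le> m" unfolding m_def using h assms(1) by simp
    have "real_of_int m \<le> b / T" unfolding m_def by linarith
    hence "real_of_int m * T \<le> b" using assms(1) by (simp add: pos_le_divide_eq)
    thus s0: "0 \<le> s1" unfolding s1_def by simp
    let ?P = "(\<lambda>k. s1 + real k * T) ` {..<nat m}"
    have below: "s1 + real k * T \<le> b - T" if "k < nat m" for k
    proof -
      have "real k + 1 \<le> real_of_int m" using that m0 by linarith
      hence "(real k + 1) * T \<le> real_of_int m * T" using assms(1) by (intro mult_right_mono) auto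
      thus ?thesis unfolding s1_def by (simp add: algebra_simps)
    qed
    have bmem: "b \<in> periodic_from T s1"
      unfolding periodic_from_def s1_def
      by (rule CollectI, rule exI[of _ "nat m"]) (use m0 in simp)
    have sub: "?P \<union> {b} \<subseteq> {r\<in>periodic_from T s1. job_deadline D DL ti r \<le> t}"
    proof (rule Un_least, rule image_subsetI, rule CollectI, rule conjI)
      fix k assume k: "k \<in> {..<nat m}"
      show "s1 + real k * T \<in> periodic_from T s1" unfolding periodic_from_def by auto
      have "s1 + real k * T \<le> a" using below[of k] k ab by auto
      thus "job_deadline D DL ti (s1 + real k * T) \<le> t"
        unfolding job_deadline_def using lc_iff assms unfolding a_def by auto
    next
      show "{b} \<subseteq> {r\<in>periodic_from T s1. job_deadline D DL ti r \<le> t}"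
        using bmem unfolding job_deadline_def using lc_iff h unfolding b_def by auto
    qed
    have inj: "inj_on (\<lambda>k. s1 + real k * T) {..<nat m}" using assms(1) by (auto simp: inj_on_def)
    have bnot: "b \<notin> ?P" using below ab assms(1) by force
    have "sum c0 (?P \<union> {b}) = sum c0 ?P + c0 b" using bnot by simp
    also have "sum c0 ?P = sum (\<lambda>k. c0 (s1 + real k * T)) {..<nat m}" using sum.reindex[OF inj] by simp
    also have "\<dots> = sum (\<lambda>k. CL) {..<nat m}"
    proof (rule sum.cong)
      fix k assume k: "k \<in> {..<nat m}"
      have "s1 + real k * T \<le> a" using below[of k] k ab by auto
      thus "c0 (s1 + real k * T) = CL" unfolding c0_def using lc_iff by auto
    qed simp
    also have "\<dots> = CL * real_of_int m" using m0 by simp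
    also have "c0 b = CH" unfolding c0_def using lc_iff h by auto
    finally have "CH + CL * real_of_int m = sum c0 (?P \<union> {b})" by simp
    also have "\<dots> \<le> demand D DL ti t (periodic_from T s1) c0"
      unfolding demand_def by (rule sum_mono2[OF finS[OF s0] sub]) (auto simp: c0nn)
    finally show "CH + CL * real_of_int m \<le> demand D DL ti t (periodic_from T s1) c0" .
  qed
  have s1eq: "s1 = t - D - real_of_int \<lfloor>(t - D) / T\<rfloor> * T" unfolding s1_def m_def b_def ..
  show ?thesis
  proof (cases "a < b \<and> 0 \<le> b \<and> CL * real N0 \<le> CH + CL * real_of_int m")
    case True
    show ?thesis
    proof (rule bexI[of _ s1], rule exI[of _ c0], intro conjI allI impI)
      show "legal_release T (periodic_from T s1)" using periodic_legal assms(1) s10 True by auto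
      show "legal_behaviour CL CH DL ti (periodic_from T s1) c0" by (rule beh)
      fix R c' assume "legal_release T R" "legal_behaviour CL CH DL ti R c'"
      hence "demand D DL ti t R c' \<le> V" by (rule upper)
      thus "demand D DL ti t R c' \<le> demand D DL ti t (periodic_from T s1) c0"
        using low1 True unfolding V_def by (auto split: if_splits)
    qed (simp add: s1eq)
  next
    case False
    show ?thesis
    proof (rule bexI[of _ 0], rule exI[of _ c0], intro conjI allI impI)
      show "legal_release T (periodic_from T 0)" using periodic_legal assms(1) by auto
      show "legal_behaviour CL CH DL ti (periodic_from T 0) c0" by (rule beh)
      fix R c' assume "legal_release T R" "legal_behaviour CL CH DL ti R c'"
      hence "demand D DL ti t R c' \<le> V" by (rule upper)
      thus "demand D DL ti t R c' \<le> demand D DL ti t (periodic_from T 0) c0"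
        using low0 False unfolding V_def by (auto split: if_splits)
    qed simp
  qed
qed

end
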